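(* Let $(K,v)$ be a valued field whose value group $\Gamma$ is dense and regular. If $(K,v)$ is extremal, then $\Gamma$ is divisible.
   Context: $(K,v)$ with valuation ring $\mathcal{O}_v$ and value group $\Gamma$ (and $v(0)=\infty$) is extremal if for every $n\ge1$ and every $F\in K[X_1,\dots,X_n]$ the set $\{v(F(a_1,\dots,a_n)) : a_i\in\mathcal{O}_v\}\subseteq\Gamma\cup\{\infty\}$ has a maximal element. An ordered group is dense if between any two distinct elements there is a third; it is regular if for every $n\ge1$ every open interval containing at least $n$ elements contains an $n$-divisible element. *)

theory Defs
  imports Main "HOL-Library.Poly_Mapping"
begin

text \<open>A (Krull) valuation on a field K with values in an ordered abelian group,
  given on nonzero elements; v(0) = infinity is handled separately (see val_ext).\<close>
definition valuation :: "('k::field \<Rightarrow> 'g::linordered_ab_group_add) \<Rightarrow> bool" where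
  "valuation v \<longleftrightarrow>
     (\<forall>x y. x \<noteq> 0 \<longrightarrow> y \<noteq> 0 \<longrightarrow> v (x * y) = v x + v y) \<and>
     (\<forall>x y. x \<noteq> 0 \<longrightarrow> y \<noteq> 0 \<longrightarrow> x + y \<noteq> 0 \<longrightarrow> min (v x) (v y) \<le> v (x + y))"

definition value_group :: "('k::field \<Rightarrow> 'g::linordered_ab_group_add) \<Rightarrow> 'g set" where
  "value_group v = v ` (UNIV - {0})"

definition val_ring :: "('k::field \<Rightarrow> 'g::linordered_ab_group_add) \<Rightarrow> 'k set" where
  "val_ring v = {x. x = 0 \<or> 0 \<le> v x}"

text \<open>Extended valuation: None stands for infinity = v(0).\<close>
definition val_ext :: "('k::field \<Rightarrow> 'g::linordered_ab_group_add) \<Rightarrow> 'k \<Rightarrow> 'g option" where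
  "val_ext v x = (if x = 0 then None else Some (v x))"

definition le_inf :: "'g::linorder option \<Rightarrow> 'g option \<Rightarrow> bool" where
  "le_inf a b = (case b of None \<Rightarrow> True
                 | Some y \<Rightarrow> (case a of None \<Rightarrow> False | Some x \<Rightarrow> x \<le> y))"

type_synonym 'k mpoly = "(nat \<Rightarrow>\<^sub>0 nat) \<Rightarrow>\<^sub>0 'k"

definition poly_in_vars :: "nat \<Rightarrow> ((nat \<Rightarrow>\<^sub>0 nat) \<Rightarrow>\<^sub>0 'k::zero) \<Rightarrow> bool" where
  "poly_in_vars n F \<longleftrightarrow> (\<forall>m \<in> Poly_Mapping.keys F. Poly_Mapping.keys m \<subseteq> {..<n})"

definition mpoly_eval :: "((nat \<Rightarrow>\<^sub>0 nat) \<Rightarrow>\<^sub>0 'k::comm_semiring_1) \<Rightarrow> (nat \<Rightarrow> 'k) \<Rightarrow> 'k" where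
  "mpoly_eval F a = (\<Sum>m\<in>Poly_Mapping.keys F. Poly_Mapping.lookup F m * (\<Prod>i\<in>Poly_Mapping.keys m. a i ^ Poly_Mapping.lookup m i))"

definition extremal :: "('k::field \<Rightarrow> 'g::linordered_ab_group_add) \<Rightarrow> bool" where
  "extremal v \<longleftrightarrow>
     (\<forall>n::nat. \<forall>F::'k mpoly. poly_in_vars n F \<longrightarrow>
        (\<exists>a. (\<forall>i<n. a i \<in> val_ring v) \<and>
             (\<forall>b. (\<forall>i<n. b i \<in> val_ring v) \<longrightarrow>
                  le_inf (val_ext v (mpoly_eval F b)) (val_ext v (mpoly_eval F a)))))"

fun nmul :: "nat \<Rightarrow> 'g::ab_group_add \<Rightarrow> 'g" where
  "nmul 0 x = 0"
| "nmul (Suc n) x = x + nmul n x"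

definition dense_set :: "'g::linorder set \<Rightarrow> bool" where
  "dense_set G \<longleftrightarrow> (\<forall>a\<in>G. \<forall>b\<in>G. a < b \<longrightarrow> (\<exists>c\<in>G. a < c \<and> c < b))"

definition n_divisible_in :: "'g::ab_group_add set \<Rightarrow> nat \<Rightarrow> 'g \<Rightarrow> bool" where
  "n_divisible_in G n x \<longleftrightarrow> (\<exists>d\<in>G. nmul n d = x)"

definition regular_set :: "'g::linordered_ab_group_add set \<Rightarrow> bool" where
  "regular_set G \<longleftrightarrow>
     (\<forall>n\<ge>1. \<forall>a\<in>G. \<forall>b\<in>G.
        (\<exists>T \<subseteq> G \<inter> {a<..<b}. finite T \<and> card T = n) \<longrightarrow>
        (\<exists>x\<in>G \<inter> {a<..<b}. n_divisible_in G n x))"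

definition divisible_set :: "'g::ab_group_add set \<Rightarrow> bool" where
  "divisible_set G \<longleftrightarrow> (\<forall>x\<in>G. \<forall>n\<ge>1. n_divisible_in G n x)"

end

theory Submission
  imports Defs
begin


definition emono :: "(nat \<Rightarrow>\<^sub>0 nat) \<Rightarrow> (nat \<Rightarrow> 'k::comm_semiring_1) \<Rightarrow> 'k" where
  "emono m a = (\<Prod>i\<in>Poly_Mapping.keys m. a i ^ Poly_Mapping.lookup m i)"

lemma mpoly_eval_superset:
  assumes "finite S" "Poly_Mapping.keys F \<subseteq> S"
  shows "mpoly_eval F a = (\<Sum>m\<in>S. Poly_Mapping.lookup F m * emono m a)"
  unfolding mpoly_eval_def emono_def[symmetric]
  by (rule sum.mono_neutral_left) (use assms in \<open>auto simp: in_keys_iff\<close>)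

lemma emono_superset:
  assumes "finite S" "Poly_Mapping.keys m \<subseteq> S"
  shows "emono m a = (\<Prod>i\<in>S. a i ^ Poly_Mapping.lookup m i)"
  unfolding emono_def
  by (rule prod.mono_neutral_left) (use assms in \<open>auto simp: in_keys_iff\<close>)

lemma mpoly_eval_add: "mpoly_eval (F + G) a = mpoly_eval F a + mpoly_eval G a"
proof -
  let ?S = "Poly_Mapping.keys F \<union> Poly_Mapping.keys G"
  have f: "finite ?S" by simp
  have "mpoly_eval (F + G) a = (\<Sum>m\<in>?S. Poly_Mapping.lookup (F+G) m * emono m a)"
    using keys_add[of F G] f by (rule_tac mpoly_eval_superset) auto
  also have "\<dots> = (\<Sum>m\<in>?S. Poly_Mapping.lookup F m * emono m a) + (\<Sum>m\<in>?S. Poly_Mapping.lookup G m * emono m a)"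
    by (simp add: lookup_add distrib_right sum.distrib)
  also have "\<dots> = mpoly_eval F a + mpoly_eval G a"
    using f by (simp add: mpoly_eval_superset[symmetric])
  finally show ?thesis .
qed

lemma mpoly_eval_zero: "mpoly_eval 0 a = 0"
  by (simp add: mpoly_eval_def)

lemma mpoly_eval_sum: "finite A \<Longrightarrow> mpoly_eval (\<Sum>k\<in>A. F k) a = (\<Sum>k\<in>A. mpoly_eval (F k) a)"
  by (induction A rule: finite_induct) (auto simp: mpoly_eval_zero mpoly_eval_add)

lemma mpoly_eval_single: "mpoly_eval (Poly_Mapping.single m c) a = c * emono m a"
  by (subst mpoly_eval_superset[of "{m}"]) (auto simp: lookup_single)

definition mon2 :: "nat \<Rightarrow> nat \<Rightarrow> (nat \<Rightarrow>\<^sub>0 nat)" where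
  "mon2 i j = Poly_Mapping.single 0 i + Poly_Mapping.single 1 j"

lemma keys_mon2: "Poly_Mapping.keys (mon2 i j) \<subseteq> {0,1}"
  unfolding mon2_def using keys_add[of "Poly_Mapping.single 0 i" "Poly_Mapping.single (1::nat) j"]
  by (auto split: if_splits)

lemma emono_mon2: "emono (mon2 i j) a = a 0 ^ i * a 1 ^ j"
  by (subst emono_superset[OF _ keys_mon2]) (auto simp: mon2_def lookup_add lookup_single)

definition Fpoly :: "'k::field \<Rightarrow> nat \<Rightarrow> 'k mpoly" where
  "Fpoly c N = (\<Sum>k\<in>{..N}. Poly_Mapping.single (mon2 k k) (of_nat (N choose k) * (- 1) ^ k * c ^ (N - k)))
     + Poly_Mapping.single (mon2 N 0) (c ^ (N+1)) + Poly_Mapping.single (mon2 0 N) (c ^ (N+2))"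

lemma Fpoly_eval: "mpoly_eval (Fpoly c N) a = (c - a 0 * a 1) ^ N + c ^ (N+1) * a 0 ^ N + c ^ (N+2) * a 1 ^ N"
proof -
  have "(c - a 0 * a 1) ^ N = (- (a 0 * a 1) + c) ^ N" by simp
  also have "\<dots> = (\<Sum>k\<le>N. of_nat (N choose k) * (- (a 0 * a 1)) ^ k * c ^ (N - k))"
    by (rule binomial_ring)
  finally have b: "(c - a 0 * a 1) ^ N = (\<Sum>k\<le>N. of_nat (N choose k) * (- (a 0 * a 1)) ^ k * c ^ (N - k))" .
  have h: "\<And>k. of_nat (N choose k) * (- 1) ^ k * c ^ (N - k) * (a 0 ^ k * a 1 ^ k)
            = of_nat (N choose k) * (- (a 0 * a 1)) ^ k * c ^ (N - k)"
  proof -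
    fix k
    have h: "(- (a 0 * a 1)) ^ k = (-1)^k * (a 0 ^ k * a 1 ^ k)"
      by (simp only: power_minus[of "a 0 * a 1"] power_mult_distrib)
    show "of_nat (N choose k) * (- 1) ^ k * c ^ (N - k) * (a 0 ^ k * a 1 ^ k)
          = of_nat (N choose k) * (- (a 0 * a 1)) ^ k * c ^ (N - k)"
      unfolding h by (simp only: mult_ac)
  qed
  have S: "(\<Sum>k\<le>N. of_nat (N choose k) * (- 1) ^ k * c ^ (N - k) * (a 0 ^ k * a 1 ^ k))
     = (\<Sum>k\<le>N. of_nat (N choose k) * (- (a 0 * a 1)) ^ k * c ^ (N - k))"
    by (intro sum.cong refl h)
  show ?thesis
    unfolding Fpoly_def mpoly_eval_add mpoly_eval_sum[OF finite_atMost] mpoly_eval_single emono_mon2 S b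
    by simp
qed

lemma Fpoly_vars: "poly_in_vars 2 (Fpoly (c::'k::field) N)"
proof -
  have "Poly_Mapping.keys (Fpoly c N) \<subseteq> (\<Union>k\<in>{..N}. {mon2 k k}) \<union> {mon2 N 0} \<union> {mon2 0 N}"
  proof -
    let ?S = "\<Sum>k\<in>{..N}. Poly_Mapping.single (mon2 k k) (of_nat (N choose k) * (- 1) ^ k * c ^ (N - k))"
    have 1: "Poly_Mapping.keys ?S \<subseteq> (\<Union>k\<in>{..N}. {mon2 k k})"
      using keys_sum[of "\<lambda>k. Poly_Mapping.single (mon2 k k) (of_nat (N choose k) * (- 1) ^ k * c ^ (N - k))" "{..N}"]
      by auto
    have 2: "Poly_Mapping.keys (Poly_Mapping.single m d) \<subseteq> {m}" for m and d :: 'k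
      by simp
    have 3: "Poly_Mapping.keys (?S + Poly_Mapping.single (mon2 N 0) (c ^ (N+1)))
        \<subseteq> (\<Union>k\<in>{..N}. {mon2 k k}) \<union> {mon2 N 0}"
      using keys_add[of ?S "Poly_Mapping.single (mon2 N 0) (c ^ (N+1))"] 1 2[of "mon2 N 0" "c ^ (N+1)"]
      by blast
    show ?thesis unfolding Fpoly_def
      using keys_add[of "?S + Poly_Mapping.single (mon2 N 0) (c ^ (N+1))" "Poly_Mapping.single (mon2 0 N) (c ^ (N+2))"]
        3 2[of "mon2 0 N" "c ^ (N+2)"] by blast
  qed
  moreover have "\<And>i j. Poly_Mapping.keys (mon2 i j) \<subseteq> {..<2}" using keys_mon2 by fastforce
  ultimately show ?thesis unfolding poly_in_vars_def by blast
qed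



lemma nmul_add: "nmul n (x + y) = nmul n x + nmul n (y::'g::ab_group_add)"
  by (induction n) (simp_all add: add_ac)
lemma nmul_addn: "nmul (m + n) (x::'g::ab_group_add) = nmul m x + nmul n x"
  by (induction m) (simp_all add: add.assoc)
lemma nmul_minus: "nmul n (- x) = - nmul n (x::'g::ab_group_add)"
  by (induction n) (simp_all add: minus_add_distrib)
lemma nmul_diff: "nmul n (x - y) = nmul n x - nmul n (y::'g::ab_group_add)"
  by (simp only: diff_conv_add_uminus nmul_add nmul_minus)
lemma nmul_mult: "nmul (m * n) (x::'g::ab_group_add) = nmul m (nmul n x)"
  by (induction m) (simp_all add: nmul_addn nmul_add)
lemma nmul_zero: "nmul n (0::'g::ab_group_add) = 0"
  by (induction n) auto
lemma nmul_nonneg: "0 \<le> x \<Longrightarrow> 0 \<le> nmul n (x::'g::linordered_ab_group_add)"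
proof (induction n)
  case (Suc n) then show ?case unfolding nmul.simps by (intro add_nonneg_nonneg)
qed (simp only: nmul.simps order_refl)
lemma nmul_pos: "0 < x \<Longrightarrow> n \<ge> 1 \<Longrightarrow> 0 < nmul n (x::'g::linordered_ab_group_add)"
proof (induction n)
  case (Suc n)
  have "0 \<le> nmul n x" using Suc.prems by (intro nmul_nonneg) simp
  then show ?case using Suc.prems unfolding nmul.simps by (intro add_pos_nonneg) auto
qed simp
lemma nmul_strict_mono: "x < y \<Longrightarrow> n \<ge> 1 \<Longrightarrow> nmul n x < nmul n (y::'g::linordered_ab_group_add)"
  using nmul_pos[of "y - x" n] unfolding nmul_diff diff_gt_0_iff_gt by simp
lemma nmul_mono: "x \<le> y \<Longrightarrow> nmul n x \<le> nmul n (y::'g::linordered_ab_group_add)"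
  using nmul_nonneg[of "y - x" n] unfolding nmul_diff diff_ge_0_iff_ge by simp
lemma nmul_le_iff: assumes n: "n \<ge> 1" shows "nmul n x \<le> nmul n y \<longleftrightarrow> x \<le> (y::'g::linordered_ab_group_add)"
proof
  assume h: "nmul n x \<le> nmul n y"
  show "x \<le> y"
  proof (rule ccontr)
    assume "\<not> x \<le> y" then have "y < x" by (rule not_le_imp_less)
    then have "nmul n y < nmul n x" using n by (rule nmul_strict_mono)
    then show False using h by (meson leD)
  qed
next
  assume "x \<le> y" then show "nmul n x \<le> nmul n y" by (rule nmul_mono)
qed
lemma nmul_less_iff: assumes n: "n \<ge> 1" shows "nmul n x < nmul n y \<longleftrightarrow> x < (y::'g::linordered_ab_group_add)"
proof
  assume h: "nmul n x < nmul n y"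
  show "x < y"
  proof (rule ccontr)
    assume "\<not> x < y" then have "y \<le> x" by (rule not_less[THEN iffD1])
    then have "nmul n y \<le> nmul n x" by (rule nmul_mono)
    then show False using h by (meson leD)
  qed
next
  assume "x < y" then show "nmul n x < nmul n y" using n by (rule nmul_strict_mono)
qed
lemma nmul_inj: assumes "n \<ge> 1" "nmul n x = nmul n y" shows "x = (y::'g::linordered_ab_group_add)"
proof (rule order_antisym)
  have "nmul n x \<le> nmul n y" using assms(2) by (rule eq_refl)
  then show "x \<le> y" using nmul_le_iff[OF assms(1)] by blast
  have "nmul n y \<le> nmul n x" using assms(2)[symmetric] by (rule eq_refl)
  then show "y \<le> x" using nmul_le_iff[OF assms(1)] by blast
qed
lemma nmul_le_n: assumes "0 \<le> x" "m \<le> n" shows "nmul m x \<le> nmul n (x::'g::linordered_ab_group_add)"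
proof -
  have e: "m + (n - m) = n" using assms(2) by simp
  have eq: "nmul m x + nmul (n - m) x = nmul n x" using nmul_addn[of m "n - m" x] unfolding e by (rule sym)
  have "0 \<le> nmul (n - m) x" using assms(1) by (rule nmul_nonneg)
  then have "nmul m x \<le> nmul m x + nmul (n - m) x" by (rule add_increasing2) (rule order_refl)
  then show ?thesis unfolding eq .
qed

context
  fixes v :: "'k::field \<Rightarrow> 'g::linordered_ab_group_add"
  assumes val: "valuation v"
begin

lemma v_mult: "x \<noteq> 0 \<Longrightarrow> y \<noteq> 0 \<Longrightarrow> v (x * y) = v x + v y"
  using val unfolding valuation_def by blast

lemma v_one: "v 1 = 0"
  using v_mult[of 1 1] by simp

lemma v_inverse: "x \<noteq> 0 \<Longrightarrow> v (inverse x) = - v x"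
  using v_mult[of x "inverse x"] by (simp add: v_one eq_neg_iff_add_eq_0 add.commute)

lemma v_divide: "x \<noteq> 0 \<Longrightarrow> y \<noteq> 0 \<Longrightarrow> v (x / y) = v x - v y"
  by (simp add: divide_inverse v_mult v_inverse)

lemma v_power: "x \<noteq> 0 \<Longrightarrow> v (x ^ n) = nmul n (v x)"
  by (induction n) (auto simp: v_one v_mult)

lemma v_m1_aux: "v ((-1::'k) * (-1)) = v (-1) + v (-1)" by (rule v_mult) simp_all
lemma v_m1_aux2: "v (-1 :: 'k) + v (-1) = v 1" using v_m1_aux by simp
lemma v_m1_aux3: "v (-1 :: 'k) + v (-1) = 0" using v_m1_aux2 unfolding v_one .
lemma v_m1: "v (-1 :: 'k) = 0" using v_m1_aux3 by (rule double_zero[THEN iffD1])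
lemma v_uminus_nz: "x \<noteq> 0 \<Longrightarrow> v (- x) = v x"  using v_mult[of "-1" x] v_m1 by simp
lemma v_uminus: "v (- x) = v x"
  by (cases "x = 0") (simp_all add: v_uminus_nz)

lemma v_ultra: "x \<noteq> 0 \<Longrightarrow> y \<noteq> 0 \<Longrightarrow> x + y \<noteq> 0 \<Longrightarrow> min (v x) (v y) \<le> v (x + y)"
  using val unfolding valuation_def by blast

lemma v_strict: assumes "x \<noteq> 0" "y \<noteq> 0" "v x < v y" shows "x + y \<noteq> 0 \<and> v (x + y) = v x"
proof -
  have ne: "x + y \<noteq> 0"
  proof
    assume "x + y = 0" then have "y = - x" by (simp only: add_eq_0_iff)
    then have "v y = v x" using v_uminus[of x] by (simp only:)
    then show False using assms(3) by (simp only: less_irrefl)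
  qed
  have 1: "min (v x) (v y) \<le> v (x + y)" using v_ultra assms ne by blast
  have ny: "- y \<noteq> 0" using assms(2) by (simp only: neg_equal_0_iff_equal not_False_eq_True)
  have ex: "x + y + - y = x" by (simp only: add.assoc right_minus add_0_right)
  have "min (v (x + y)) (v (- y)) \<le> v (x + y + - y)" by (rule v_ultra[OF ne ny]) (unfold ex, rule assms(1))
  then have 2: "min (v (x + y)) (v y) \<le> v x" unfolding ex v_uminus .
  have 3: "v x \<le> v (x + y)" using 1 unfolding min_absorb1[OF less_imp_le[OF assms(3)]] .
  have 4: "v (x + y) \<le> v x"
  proof (cases "v (x + y) \<le> v y")
    case True from 2 show ?thesis unfolding min_absorb1[OF True] .
  next
    case False then have "v y \<le> v (x + y)" by (intro less_imp_le not_le_imp_less)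
    then have "min (v (x + y)) (v y) = v y" by (rule min_absorb2)
    then have "v y \<le> v x" using 2 by (simp only:)
    from leD[OF this] assms(3) show ?thesis by contradiction
  qed
  from order_antisym[OF 4 3] ne show ?thesis by (intro conjI)
qed

lemma vsum2:
  assumes "x \<noteq> 0 \<or> y \<noteq> 0" "x \<noteq> 0 \<Longrightarrow> y \<noteq> 0 \<Longrightarrow> v x \<noteq> v y"
  shows "x + y \<noteq> 0 \<and> (x \<noteq> 0 \<longrightarrow> v (x+y) \<le> v x) \<and> (y \<noteq> 0 \<longrightarrow> v (x+y) \<le> v y)
     \<and> ((x \<noteq> 0 \<and> v (x+y) = v x) \<or> (y \<noteq> 0 \<and> v (x+y) = v y))"
proof (cases "x = 0")
  case True then show ?thesis using assms by simp
next
  case xn: False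
  show ?thesis
  proof (cases "y = 0")
    case True then show ?thesis using xn by simp
  next
    case yn: False
    then have "v x \<noteq> v y" using assms xn by blast
    then have "v x < v y \<or> v y < v x" by (rule neq_iff[THEN iffD1])
    then show ?thesis
    proof
      assume "v x < v y" then show ?thesis using v_strict[of x y] xn yn by auto
    next
      assume "v y < v x" then show ?thesis using v_strict[of y x] xn yn by (auto simp: add.commute)
    qed
  qed
qed

lemma vsum3:
  assumes "A \<noteq> 0 \<or> B \<noteq> 0 \<or> C \<noteq> 0"
    "A \<noteq> 0 \<Longrightarrow> B \<noteq> 0 \<Longrightarrow> v A \<noteq> v B"
    "A \<noteq> 0 \<Longrightarrow> C \<noteq> 0 \<Longrightarrow> v A \<noteq> v C"
    "B \<noteq> 0 \<Longrightarrow> C \<noteq> 0 \<Longrightarrow> v B \<noteq> v C"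
  shows "A + B + C \<noteq> 0 \<and> (A \<noteq> 0 \<longrightarrow> v (A+B+C) \<le> v A) \<and> (B \<noteq> 0 \<longrightarrow> v (A+B+C) \<le> v B)
     \<and> (C \<noteq> 0 \<longrightarrow> v (A+B+C) \<le> v C)"
proof (cases "A = 0 \<and> B = 0")
  case True then show ?thesis using assms by simp
next
  case False
  then have h: "A + B \<noteq> 0 \<and> (A \<noteq> 0 \<longrightarrow> v (A+B) \<le> v A) \<and> (B \<noteq> 0 \<longrightarrow> v (A+B) \<le> v B)
     \<and> ((A \<noteq> 0 \<and> v (A+B) = v A) \<or> (B \<noteq> 0 \<and> v (A+B) = v B))"
    using False assms(2) by (intro vsum2) auto
  have d: "A + B \<noteq> 0 \<Longrightarrow> C \<noteq> 0 \<Longrightarrow> v (A + B) \<noteq> v C"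
  proof -
    assume "C \<noteq> 0"
    from h have "(A \<noteq> 0 \<and> v (A+B) = v A) \<or> (B \<noteq> 0 \<and> v (A+B) = v B)" by blast
    then show "v (A + B) \<noteq> v C" using assms(3,4) \<open>C \<noteq> 0\<close> by metis
  qed
  have e: "A + B + C \<noteq> 0 \<and> (A + B \<noteq> 0 \<longrightarrow> v (A+B+C) \<le> v (A + B)) \<and> (C \<noteq> 0 \<longrightarrow> v (A+B+C) \<le> v C)"
    using vsum2[of "A+B" C, OF _ d] h by blast
  show ?thesis
  proof (intro conjI impI)
    show "A + B + C \<noteq> 0" using e by blast
    show "v (A + B + C) \<le> v A" if "A \<noteq> 0" using e h that order_trans by blast
    show "v (A + B + C) \<le> v B" if "B \<noteq> 0" using e h that order_trans by blast
    show "v (A + B + C) \<le> v C" if "C \<noteq> 0" using e that by blast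
  qed
qed

lemma vg_v: "x \<noteq> 0 \<Longrightarrow> v x \<in> value_group v"
  unfolding value_group_def by auto
lemma vg_zero: "0 \<in> value_group v"
  using vg_v[of 1] v_one by simp
lemma vg_obtain: "a \<in> value_group v \<Longrightarrow> \<exists>x. x \<noteq> 0 \<and> v x = a"
  unfolding value_group_def by auto
lemma vg_add: assumes "a \<in> value_group v" "b \<in> value_group v" shows "a + b \<in> value_group v"
proof -
  obtain x y where "x \<noteq> 0" "v x = a" "y \<noteq> 0" "v y = b" using vg_obtain assms by blast
  then have "v (x * y) = a + b" "x * y \<noteq> 0" using v_mult by auto
  then show ?thesis using vg_v by metis
qed
lemma vg_uminus: assumes "a \<in> value_group v" shows "- a \<in> value_group v"
proof -
  obtain x where "x \<noteq> 0" "v x = a" using vg_obtain assms by blast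
  then have "v (inverse x) = - a" "inverse x \<noteq> 0" using v_inverse by auto
  then show ?thesis using vg_v by metis
qed
lemma vg_diff: "a \<in> value_group v \<Longrightarrow> b \<in> value_group v \<Longrightarrow> a - b \<in> value_group v"
  using vg_add[of a "- b"] vg_uminus[of b] by simp
lemma vg_nmul: "a \<in> value_group v \<Longrightarrow> nmul n a \<in> value_group v"
  by (induction n) (auto simp: vg_zero vg_add)

end

lemma dense_card:
  fixes G :: "'g::linorder set"
  assumes d: "dense_set G" and a: "a \<in> G"
  shows "b \<in> G \<Longrightarrow> a < b \<Longrightarrow> \<exists>T \<subseteq> G \<inter> {a<..<b}. finite T \<and> card T = n"
proof (induction n arbitrary: b)
  case 0 then show ?case by (intro exI[of _ "{}"]) auto
next
  case (Suc n)
  obtain c where c: "c \<in> G" "a < c" "c < b" using d a Suc.prems unfolding dense_set_def by blast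
  obtain T where T: "T \<subseteq> G \<inter> {a<..<c}" "finite T" "card T = n" using Suc.IH[OF c(1,2)] by blast
  have "c \<notin> T" using T(1) by auto
  then have "card (insert c T) = Suc n" using T by simp
  moreover have "insert c T \<subseteq> G \<inter> {a<..<b}" using T(1) c by (auto simp: subset_iff intro: less_trans)
  ultimately show ?case using T(2) by (intro exI[of _ "insert c T"]) auto
qed

lemma le_inf_Some: "le_inf (Some p) (Some q) \<longleftrightarrow> p \<le> q"
  by (simp add: le_inf_def)

context
  fixes v :: "'k::field \<Rightarrow> 'g::linordered_ab_group_add" and c :: 'k and g :: 'g and m :: nat
  assumes val: "valuation v" and cnz: "c \<noteq> 0" and vc: "v c = g" and gpos: "0 < g"
    and m1: "m \<ge> 1" and ndiv: "\<forall>d\<in>value_group v. nmul m d \<noteq> g"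
begin

lemma N1: "2 * m \<ge> 1" using m1 by simp

lemma coset:
  assumes "e \<in> value_group v"
  shows "nmul (2*m) e \<noteq> g \<and> nmul (2*m) e \<noteq> g + g"
proof
  have "nmul (2*m) e = nmul m (nmul 2 e)" using nmul_mult[of m 2 e] by (simp add: mult.commute)
  moreover have "nmul 2 e \<in> value_group v" using assms by (rule vg_nmul[OF val])
  ultimately show "nmul (2*m) e \<noteq> g" using ndiv by metis
  show "nmul (2*m) e \<noteq> g + g"
  proof
    assume h: "nmul (2*m) e = g + g"
    have "nmul (2*m) e = nmul 2 (nmul m e)" by (rule nmul_mult)
    moreover have "g + g = nmul 2 g" by (simp add: numeral_2_eq_2)
    ultimately have "nmul 2 (nmul m e) = nmul 2 g" using h by simp
    then have "nmul m e = g" by (rule nmul_inj[rotated]) simp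
    then show False using ndiv assms by blast
  qed
qed

lemma distinct_vals:
  assumes "e1 \<in> value_group v" "e2 \<in> value_group v" "k2 - k1 = g \<or> k2 - k1 = g + g"
  shows "nmul (2*m) e1 + k1 \<noteq> nmul (2*m) e2 + k2"
proof
  assume "nmul (2*m) e1 + k1 = nmul (2*m) e2 + k2"
  then have "nmul (2*m) e1 - nmul (2*m) e2 = k2 - k1" by (simp add: algebra_simps)
  then have "nmul (2*m) (e1 - e2) = k2 - k1" by (simp only: nmul_diff)
  moreover have "e1 - e2 \<in> value_group v" using assms by (intro vg_diff[OF val])
  ultimately show False using coset assms(3) by metis
qed

abbreviation "N \<equiv> 2 * m"

lemma vB: assumes "x \<noteq> 0" shows "c ^ (N+1) * x ^ N \<noteq> 0 \<and> v (c ^ (N+1) * x ^ N) = nmul N (v x + g) + g"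
proof
  show "c ^ (N+1) * x ^ N \<noteq> 0" using assms cnz by simp
  have "v (c ^ (N+1) * x ^ N) = v (c ^ (N+1)) + v (x ^ N)" using assms cnz by (intro v_mult[OF val]) simp_all
  also have "\<dots> = nmul (N+1) g + nmul N (v x)" by (simp only: v_power[OF val cnz] v_power[OF val assms] vc)
  also have "\<dots> = nmul N (v x + g) + g" by (simp add: nmul_add algebra_simps)
  finally show "v (c ^ (N+1) * x ^ N) = nmul N (v x + g) + g" .
qed

lemma vC: assumes "y \<noteq> 0" shows "c ^ (N+2) * y ^ N \<noteq> 0 \<and> v (c ^ (N+2) * y ^ N) = nmul N (v y + g) + (g + g)"
proof
  show "c ^ (N+2) * y ^ N \<noteq> 0" using assms cnz by simp
  have "v (c ^ (N+2) * y ^ N) = v (c ^ (N+2)) + v (y ^ N)" using assms cnz by (intro v_mult[OF val]) simp_all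
  also have "\<dots> = nmul (N+2) g + nmul N (v y)" by (simp only: v_power[OF val cnz] v_power[OF val assms] vc)
  also have "\<dots> = nmul N (v y + g) + (g + g)" by (simp add: nmul_add algebra_simps numeral_2_eq_2)
  finally show "v (c ^ (N+2) * y ^ N) = nmul N (v y + g) + (g + g)" .
qed

lemma vA: assumes "w \<noteq> 0" shows "w ^ N \<noteq> 0 \<and> v (w ^ N) = nmul N (v w) + 0"
  using assms by (simp add: v_power[OF val])

definition "TT = nmul N (g + g + g) + (g + g + g)"

lemma gG: "g \<in> value_group v" using vg_v[OF val cnz] vc by simp

lemma g3pos: "0 < g + g + g" using gpos by (simp add: add_pos_pos)

lemma claim1:
  assumes x: "x \<in> val_ring v" and y: "y \<in> val_ring v"
  defines "F \<equiv> (c - x * y) ^ N + c ^ (N+1) * x ^ N + c ^ (N+2) * y ^ N"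
  shows "F \<noteq> 0 \<and> v F + v F < TT"
proof -
  let ?A = "(c - x * y) ^ N" and ?B = "c ^ (N+1) * x ^ N" and ?C = "c ^ (N+2) * y ^ N"
  have dAB: "?A \<noteq> 0 \<Longrightarrow> ?B \<noteq> 0 \<Longrightarrow> v ?A \<noteq> v ?B"
  proof -
    assume a: "?A \<noteq> 0" "?B \<noteq> 0"
    then have nz: "c - x * y \<noteq> 0" "x \<noteq> 0" using m1 by auto
    have e1: "v ?A = nmul N (v (c - x*y)) + 0" using vA[OF nz(1)] by blast
    have e2: "v ?B = nmul N (v x + g) + g" using vB[OF nz(2)] by blast
    have "nmul N (v (c - x*y)) + 0 \<noteq> nmul N (v x + g) + g"
      by (rule distinct_vals) (simp_all add: vg_v[OF val nz(1)] vg_add[OF val vg_v[OF val nz(2)] gG])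
    then show ?thesis unfolding e1 e2 .
  qed
  have dAC: "?A \<noteq> 0 \<Longrightarrow> ?C \<noteq> 0 \<Longrightarrow> v ?A \<noteq> v ?C"
  proof -
    assume a: "?A \<noteq> 0" "?C \<noteq> 0"
    then have nz: "c - x * y \<noteq> 0" "y \<noteq> 0" using m1 by auto
    have e1: "v ?A = nmul N (v (c - x*y)) + 0" using vA[OF nz(1)] by blast
    have e2: "v ?C = nmul N (v y + g) + (g + g)" using vC[OF nz(2)] by blast
    have "nmul N (v (c - x*y)) + 0 \<noteq> nmul N (v y + g) + (g + g)"
      by (rule distinct_vals) (simp_all add: vg_v[OF val nz(1)] vg_add[OF val vg_v[OF val nz(2)] gG])
    then show ?thesis unfolding e1 e2 .
  qed
  have dBC: "?B \<noteq> 0 \<Longrightarrow> ?C \<noteq> 0 \<Longrightarrow> v ?B \<noteq> v ?C"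
  proof -
    assume a: "?B \<noteq> 0" "?C \<noteq> 0"
    then have nz: "x \<noteq> 0" "y \<noteq> 0" using m1 by auto
    have e1: "v ?B = nmul N (v x + g) + g" using vB[OF nz(1)] by blast
    have e2: "v ?C = nmul N (v y + g) + (g + g)" using vC[OF nz(2)] by blast
    have "nmul N (v x + g) + g \<noteq> nmul N (v y + g) + (g + g)"
      by (rule distinct_vals) (simp_all add: vg_add[OF val vg_v[OF val nz(1)] gG] vg_add[OF val vg_v[OF val nz(2)] gG])
    then show ?thesis unfolding e1 e2 .
  qed
  show ?thesis
  proof (cases "x * y = 0 \<or> g < v (x * y)")
    case True
    have w: "c - x * y \<noteq> 0 \<and> v (c - x * y) = g"
    proof (cases "x * y = 0")
      case True then have e: "c - x * y = c" by simp
      show ?thesis unfolding e using cnz vc by simp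
    next
      case False
      then have "g < v (- (x * y))" using \<open>x * y = 0 \<or> g < v (x * y)\<close> by (simp add: v_uminus[OF val])
      then have "c + - (x * y) \<noteq> 0 \<and> v (c + - (x * y)) = v c" using cnz False vc
        by (intro v_strict[OF val]) simp_all
      then show ?thesis using vc by simp
    qed
    then have An: "?A \<noteq> 0" and vAe: "v ?A = nmul N g" using vA by auto
    have "F \<noteq> 0 \<and> v F \<le> v ?A"
      using vsum3[OF val, of ?A ?B ?C] An dAB dAC dBC unfolding F_def by blast
    then have F1: "F \<noteq> 0" and F2': "v F \<le> v ?A" by blast+
    from F2' have F2: "v F \<le> nmul N g" unfolding vAe .
    have "v F + v F \<le> nmul N g + nmul N g" by (rule add_mono[OF F2 F2])
    also have "\<dots> = nmul N (g + g)" by (simp add: nmul_add)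
    also have "\<dots> \<le> nmul N (g + g + g)" using gpos by (intro nmul_mono) simp
    also have "\<dots> < TT" unfolding TT_def using g3pos by simp
    finally show ?thesis using F1 by simp
  next
    case False
    then have xy: "x \<noteq> 0" "y \<noteq> 0" and le: "v (x * y) \<le> g" by auto
    then have st: "v x + v y \<le> g" using v_mult[OF val] by metis
    have Bn: "?B \<noteq> 0" and vBe: "v ?B = nmul N (v x + g) + g" using vB xy by auto
    have Cn: "?C \<noteq> 0" and vCe: "v ?C = nmul N (v y + g) + (g + g)" using vC xy by auto
    have "F \<noteq> 0 \<and> v F \<le> v ?B \<and> v F \<le> v ?C"
      using vsum3[OF val, of ?A ?B ?C] Bn Cn dAB dAC dBC unfolding F_def by blast
    then have F1: "F \<noteq> 0" and FB: "v F \<le> v ?B" and FC: "v F \<le> v ?C" by auto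
    have sum: "v ?B + v ?C \<le> TT"
    proof -
      have "v ?B + v ?C = nmul N (v x + v y + g + g) + (g + g + g)"
        unfolding vBe vCe by (simp add: nmul_add algebra_simps)
      also have "\<dots> \<le> nmul N (g + g + g) + (g + g + g)"
        using st by (intro add_right_mono nmul_mono) (simp add: add_right_mono)
      finally show ?thesis unfolding TT_def .
    qed
    have "v F + v F < v ?B + v ?C"
    proof (cases "v ?B < v ?C")
      case True
      have "v F + v F \<le> v ?B + v ?B" by (rule add_mono[OF FB FB])
      also have "\<dots> < v ?B + v ?C" using True by (rule add_strict_left_mono)
      finally show ?thesis .
    next
      case False
      then have "v ?C < v ?B" using dBC Bn Cn by (meson le_less_linear order_le_neq_trans) 
      have "v F + v F \<le> v ?C + v ?C" by (rule add_mono[OF FC FC])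
      also have "\<dots> < v ?B + v ?C" using \<open>v ?C < v ?B\<close> by (rule add_strict_right_mono)
      finally show ?thesis .
    qed
    then show ?thesis using sum F1 by (meson order_less_le_trans)
  qed
qed


lemma claim2:
  assumes phiG: "phi \<in> value_group v" and phi: "phi + phi < TT"
    and dn: "dense_set (value_group v)" and rg: "regular_set (value_group v)"
  shows "\<exists>x y. x \<in> val_ring v \<and> y \<in> val_ring v \<and>
     (c - x * y) ^ N + c ^ (N+1) * x ^ N + c ^ (N+2) * y ^ N \<noteq> 0 \<and>
     phi < v ((c - x * y) ^ N + c ^ (N+1) * x ^ N + c ^ (N+2) * y ^ N)"
proof -
  define K1 where "K1 = nmul N g + g"
  define K2 where "K2 = nmul N (g + g) + (g + g)"
  define L where "L = phi - K1"
  define U where "U = K2 - phi"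
  have TTK: "TT = K1 + K2" unfolding TT_def K1_def K2_def by (simp add: nmul_add algebra_simps)
  have LU: "L < U" using phi unfolding TTK L_def U_def by (simp add: algebra_simps)
  have gG': "nmul N g \<in> value_group v" by (rule vg_nmul[OF val gG])
  have K1G: "K1 \<in> value_group v" unfolding K1_def by (intro vg_add[OF val] gG gG')
  have K2G: "K2 \<in> value_group v" unfolding K2_def
    by (intro vg_add[OF val] vg_nmul[OF val] gG)
  have LG: "L \<in> value_group v" unfolding L_def by (intro vg_diff[OF val] phiG K1G)
  have UG: "U \<in> value_group v" unfolding U_def by (intro vg_diff[OF val] phiG K2G)
  have gle: "g \<le> nmul N g"
  proof -
    have "nmul 1 g \<le> nmul N g" using gpos m1 by (intro nmul_le_n) simp_all
    then show ?thesis by simp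
  qed
  have "\<exists>d. d \<in> value_group v \<and> 0 \<le> d \<and> d \<le> g \<and> L < nmul N d \<and> nmul N d < U"
  proof (cases "L < 0")
    case True
    have K12: "K1 \<le> K2" unfolding K1_def K2_def
      using gpos by (intro add_mono nmul_mono) simp_all
    have "phi < K2"
    proof (rule ccontr)
      assume "\<not> phi < K2" then have "K2 \<le> phi" by simp
      then have "K1 + K2 \<le> phi + phi" using K12 by (intro add_mono) simp_all
      then show False using phi unfolding TTK by simp
    qed
    then have "0 < U" unfolding U_def by simp
    then show ?thesis using True gpos vg_zero[OF val] by (intro exI[of _ 0]) (simp add: nmul_zero)
  next
    case False
    then have L0: "0 \<le> L" by simp
    have "L < nmul N g"
    proof (rule ccontr)
      assume "\<not> L < nmul N g" then have "nmul N g \<le> L" by simp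
      then have h: "K1 + nmul N g \<le> phi" unfolding L_def by (simp add: algebra_simps)
      have "K1 + K2 \<le> (K1 + nmul N g) + (K1 + nmul N g)"
        unfolding K1_def K2_def using gle by (simp add: nmul_add algebra_simps)
      also have "\<dots> \<le> phi + phi" using h by (intro add_mono)
      finally show False using phi unfolding TTK by simp
    qed
    define U' where "U' = min U (nmul N g)"
    have LU': "L < U'" unfolding U'_def using LU \<open>L < nmul N g\<close> by simp
    have U'G: "U' \<in> value_group v" unfolding U'_def using UG gG' by (simp add: min_def)
    obtain TS where "TS \<subseteq> value_group v \<inter> {L<..<U'}" "finite TS" "card TS = N"
      using dense_card[OF dn LG U'G LU'] by blast
    then obtain z where z: "z \<in> value_group v \<inter> {L<..<U'}" "n_divisible_in (value_group v) N z"
      using rg LG U'G N1 unfolding regular_set_def by blast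
    then obtain d where d: "d \<in> value_group v" "nmul N d = z" unfolding n_divisible_in_def by blast
    have zL: "L < z" and zU: "z < U" and zg: "z < nmul N g" using z(1) unfolding U'_def by auto
    have "0 \<le> d"
    proof (rule ccontr)
      assume "\<not> 0 \<le> d" then have "d < 0" by simp
      then have "nmul N d < nmul N 0" using N1 by (intro nmul_strict_mono)
      then show False using d zL L0 by (simp add: nmul_zero)
    qed
    moreover have "d \<le> g"
    proof -
      have "nmul N d < nmul N g" using d zg by simp
      then have "d < g" using nmul_less_iff[OF N1] by blast
      then show ?thesis by simp
    qed
    ultimately show ?thesis using d zL zU by blast
  qed
  then obtain d where d: "d \<in> value_group v" "0 \<le> d" "d \<le> g" "L < nmul N d" "nmul N d < U" by blast
  obtain x where x: "x \<noteq> 0" "v x = d" using vg_obtain[OF val d(1)] by blast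
  define y where "y = c / x"
  have yn: "y \<noteq> 0" unfolding y_def using x cnz by simp
  have vy: "v y = g - d" unfolding y_def using v_divide[OF val cnz x(1)] vc x by simp
  have xO: "x \<in> val_ring v" unfolding val_ring_def using x d by simp
  have yO: "y \<in> val_ring v" unfolding val_ring_def using vy d by simp
  have A0: "(c - x * y) ^ N = 0" unfolding y_def using x m1 by simp
  have B: "c ^ (N+1) * x ^ N \<noteq> 0 \<and> v (c ^ (N+1) * x ^ N) = nmul N (d + g) + g" using vB x by simp
  have C: "c ^ (N+2) * y ^ N \<noteq> 0 \<and> v (c ^ (N+2) * y ^ N) = nmul N (g - d + g) + (g + g)"
    using vC[OF yn] vy by simp
  have pB: "phi < nmul N (d + g) + g"
    using d(4) unfolding L_def K1_def by (simp add: nmul_add algebra_simps)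
  have pC: "phi < nmul N (g - d + g) + (g + g)"
    using d(5) unfolding U_def K2_def by (simp add: nmul_add nmul_diff algebra_simps)
  have dBC: "v (c ^ (N+1) * x ^ N) \<noteq> v (c ^ (N+2) * y ^ N)"
  proof -
    have "nmul N (d + g) + g \<noteq> nmul N (g - d + g) + (g + g)"
      by (rule distinct_vals) (simp_all add: vg_add[OF val] vg_diff[OF val] d(1) gG)
    then show ?thesis using B C by simp
  qed
  have S: "c ^ (N+1) * x ^ N + c ^ (N+2) * y ^ N \<noteq> 0 \<and>
      (v (c ^ (N+1) * x ^ N + c ^ (N+2) * y ^ N) = v (c ^ (N+1) * x ^ N) \<or>
       v (c ^ (N+1) * x ^ N + c ^ (N+2) * y ^ N) = v (c ^ (N+2) * y ^ N))"
    using vsum2[OF val, of "c ^ (N+1) * x ^ N" "c ^ (N+2) * y ^ N"] B C dBC by blast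
  have "phi < v (c ^ (N+1) * x ^ N + c ^ (N+2) * y ^ N)" using S B C pB pC by auto
  moreover have E: "(c - x * y) ^ N + c ^ (N+1) * x ^ N + c ^ (N+2) * y ^ N
     = c ^ (N+1) * x ^ N + c ^ (N+2) * y ^ N" unfolding A0 by simp
  ultimately have "x \<in> val_ring v \<and> y \<in> val_ring v \<and>
     (c - x * y) ^ N + c ^ (N+1) * x ^ N + c ^ (N+2) * y ^ N \<noteq> 0 \<and>
     phi < v ((c - x * y) ^ N + c ^ (N+1) * x ^ N + c ^ (N+2) * y ^ N)"
    using xO yO S unfolding E by blast
  then show ?thesis by blast
qed

end


theorem proposition3p4:
  fixes v :: "'k::field \<Rightarrow> 'g::linordered_ab_group_add"
  assumes "valuation v"
    and "dense_set (value_group v)"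
    and "regular_set (value_group v)"
    and "extremal v"
  shows "divisible_set (value_group v)"
proof (rule ccontr)
  assume "\<not> divisible_set (value_group v)"
  then obtain x0 n where x0: "x0 \<in> value_group v" "n \<ge> 1" "\<not> n_divisible_in (value_group v) n x0"
    unfolding divisible_set_def by blast
  have nd0: "\<forall>d\<in>value_group v. nmul n d \<noteq> x0" using x0(3) unfolding n_divisible_in_def by blast
  have "x0 \<noteq> 0" using nd0 vg_zero[OF assms(1)] nmul_zero by metis
  obtain g where g: "g \<in> value_group v" "0 < g" "\<forall>d\<in>value_group v. nmul n d \<noteq> g"
  proof (cases "0 < x0")
    case True then show ?thesis using that x0 nd0 by blast
  next
    case False
    then have "0 < - x0" using \<open>x0 \<noteq> 0\<close> by (simp add: less_le)
    moreover have "\<forall>d\<in>value_group v. nmul n d \<noteq> - x0"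
    proof
      fix d assume "d \<in> value_group v"
      then have "- d \<in> value_group v" by (rule vg_uminus[OF assms(1)])
      then have "nmul n (- d) \<noteq> x0" using nd0 by blast
      then show "nmul n d \<noteq> - x0" by (auto simp: nmul_minus)
    qed
    ultimately show ?thesis using that vg_uminus[OF assms(1) x0(1)] by blast
  qed
  obtain c where c: "c \<noteq> 0" "v c = g" using vg_obtain[OF assms(1) g(1)] by blast
  note ctx = assms(1) c g(2) x0(2) g(3)
  let ?F = "Fpoly c (2 * n)"
  obtain a where a: "\<forall>i<2. a i \<in> val_ring v"
    and amax: "\<forall>b. (\<forall>i<2. b i \<in> val_ring v) \<longrightarrow>
                  le_inf (val_ext v (mpoly_eval ?F b)) (val_ext v (mpoly_eval ?F a))"
    using assms(4) Fpoly_vars[of c "2 * n"] unfolding extremal_def by blast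
  have a0: "a 0 \<in> val_ring v" and a1: "a 1 \<in> val_ring v" using a by auto
  have Fa: "mpoly_eval ?F a = (c - a 0 * a 1) ^ (2*n) + c ^ (2*n+1) * a 0 ^ (2*n) + c ^ (2*n+2) * a 1 ^ (2*n)"
    by (rule Fpoly_eval)
  have c1: "mpoly_eval ?F a \<noteq> 0 \<and> v (mpoly_eval ?F a) + v (mpoly_eval ?F a) < TT g n"
    unfolding Fa by (rule claim1[OF ctx a0 a1])
  have phiG: "v (mpoly_eval ?F a) \<in> value_group v" using c1 vg_v[OF assms(1)] by blast
  obtain x y where xy: "x \<in> val_ring v" "y \<in> val_ring v"
    "(c - x * y) ^ (2*n) + c ^ (2*n+1) * x ^ (2*n) + c ^ (2*n+2) * y ^ (2*n) \<noteq> 0"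
    "v (mpoly_eval ?F a) < v ((c - x * y) ^ (2*n) + c ^ (2*n+1) * x ^ (2*n) + c ^ (2*n+2) * y ^ (2*n))"
    using claim2[OF ctx phiG _ assms(2) assms(3)] c1 by blast
  define b where "b = (\<lambda>i::nat. if i = 0 then x else y)"
  have bO: "\<forall>i<2. b i \<in> val_ring v" unfolding b_def using xy by auto
  have Fb: "mpoly_eval ?F b = (c - x * y) ^ (2*n) + c ^ (2*n+1) * x ^ (2*n) + c ^ (2*n+2) * y ^ (2*n)"
    unfolding Fpoly_eval b_def by simp
  have "le_inf (val_ext v (mpoly_eval ?F b)) (val_ext v (mpoly_eval ?F a))" using amax bO by blast
  then have "v (mpoly_eval ?F b) \<le> v (mpoly_eval ?F a)"
    using c1 xy(3) unfolding Fb val_ext_def by (simp add: le_inf_Some)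
  then show False using xy(4) unfolding Fb by simp
qed

end
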